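(* Let $F:\mathbb{R}^d\to\mathbb{R}$ be twice differentiable with $L_2$-Lipschitz Hessian. Let $x_k\in\mathbb{R}^d$, $s_k\in\mathbb{R}^d$, $\epsilon_1>0$, $M>0$, $\alpha,\beta\ge0$, and let $g_k\in\mathbb{R}^d$, $H_k\in\mathbb{R}^{d\times d}$ symmetric satisfy $\|H_k-\nabla^2F(x_k)\|\le\alpha\max\{\|s_k\|,\epsilon_1\}$ and $\|g_k-\nabla F(x_k)\|\le\beta\max\{\|s_k\|^2,\epsilon_1^2\}$. Let $s_{k+1}$ be a global minimizer of $s\mapsto g_k^\top s+\frac12 s^\top H_k s+\frac M6\|s\|^3$ and $x_{k+1}=x_k+s_{k+1}$. Then $$F(x_{k+1})-F(x_k)\le -\Big(\frac{3M-2L_2}{12}-2\beta-\alpha\Big)\|s_{k+1}\|^3+\Big(\beta+\frac\alpha2\Big)\|s_k\|^3+\Big(\beta+\frac\alpha2\Big)\epsilon_1^3 .$$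
   Context: $\|\cdot\|$ denotes the Euclidean norm for vectors and the spectral norm for matrices. *)

theory Defs
  imports "HOL-Analysis.Analysis"
begin

definition spec_norm :: "real^'n^'n \<Rightarrow> real" where
  "spec_norm A = onorm (\<lambda>v. A *v v)"

definition cubic_model :: "real^'n \<Rightarrow> real^'n^'n \<Rightarrow> real \<Rightarrow> real^'n \<Rightarrow> real" where
  "cubic_model g H M s = g \<bullet> s + (1/2) * (s \<bullet> (H *v s)) + (M/6) * norm s ^ 3"

end

theory Submission imports Defs begin

lemma spec_bound: "norm (A *v v) \<le> spec_norm A * norm v"
  unfolding spec_norm_def by (rule onorm) simp

lemma dcomp:
  assumes "\<And>x. (G has_derivative (\<lambda>h. J x h)) (at x)"
  shows "((\<lambda>t::real. G (x + t *\<^sub>R s)) has_derivative (\<lambda>h. J (x + t *\<^sub>R s) (h *\<^sub>R s))) (at t)"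
proof -
  have "((\<lambda>t. x + t *\<^sub>R s) has_derivative (\<lambda>h. h *\<^sub>R s)) (at t)"
    by (auto intro!: derivative_eq_intros)
  from has_derivative_compose[OF this assms] show ?thesis by (simp add: o_def)
qed

lemma taylor:
  fixes F :: "real^'n \<Rightarrow> real"
    and gradF :: "real^'n \<Rightarrow> real^'n"
    and HessF :: "real^'n \<Rightarrow> real^'n^'n"
  assumes grad: "\<And>x. (F has_derivative (\<lambda>h. gradF x \<bullet> h)) (at x)"
    and hess: "\<And>x. (gradF has_derivative (\<lambda>h. HessF x *v h)) (at x)"
    and lip: "\<And>x y. spec_norm (HessF x - HessF y) \<le> L2 * norm (x - y)"
  shows "F (x + s) - F x \<le> gradF x \<bullet> s + 1/2 * (s \<bullet> (HessF x *v s)) + L2/6 * norm s ^ 3"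
proof -
  define k where "k t = gradF (x + t *\<^sub>R s) \<bullet> s - gradF x \<bullet> s - t * (s \<bullet> (HessF x *v s)) - L2/2 * t^2 * norm s ^ 3" for t
  have dk: "(k has_real_derivative (s \<bullet> ((HessF (x + t *\<^sub>R s) - HessF x) *v s) - L2 * t * norm s ^ 3)) (at t)" for t
  proof -
    have "((\<lambda>t. gradF (x + t *\<^sub>R s) \<bullet> s) has_derivative (\<lambda>h. (HessF (x + t *\<^sub>R s) *v (h *\<^sub>R s)) \<bullet> s)) (at t)"
      using dcomp[OF hess, of x s t] by (auto intro!: derivative_eq_intros)
    then have "((\<lambda>t. gradF (x + t *\<^sub>R s) \<bullet> s) has_real_derivative ((HessF (x + t *\<^sub>R s) *v s) \<bullet> s)) (at t)"
      unfolding has_field_derivative_def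
      by (rule has_derivative_eq_rhs) (auto simp: matrix_vector_mult_scaleR algebra_simps)
    then show ?thesis unfolding k_def
      by (auto intro!: derivative_eq_intros simp: matrix_vector_mult_diff_rdistrib inner_diff_right inner_commute algebra_simps)
  qed
  have kle: "k t \<le> 0" if t: "0 \<le> t" for t
  proof -
    have "k t \<le> k 0"
    proof (rule DERIV_nonpos_imp_nonincreasing[OF t])
      fix y assume y: "0 \<le> y" "y \<le> t"
      have "s \<bullet> ((HessF (x + y *\<^sub>R s) - HessF x) *v s) \<le> norm s * norm ((HessF (x + y *\<^sub>R s) - HessF x) *v s)"
        using norm_cauchy_schwarz by blast
      also have "\<dots> \<le> norm s * (spec_norm (HessF (x + y *\<^sub>R s) - HessF x) * norm s)"
        by (simp add: mult_left_mono spec_bound)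
      also have "\<dots> \<le> norm s * ((L2 * (y * norm s)) * norm s)"
        using lip[of "x + y *\<^sub>R s" x] y by (intro mult_left_mono mult_right_mono) auto
      finally show "\<exists>d. (k has_real_derivative d) (at y) \<and> d \<le> 0"
        using dk by (intro exI conjI) (auto simp: power3_eq_cube algebra_simps)
    qed
    moreover have "k 0 = 0" by (simp add: k_def)
    ultimately show ?thesis by simp
  qed
  define h where "h t = F (x + t *\<^sub>R s) - F x - t * (gradF x \<bullet> s) - t^2/2 * (s \<bullet> (HessF x *v s)) - L2/6 * t^3 * norm s ^ 3" for t
  have dh: "(h has_real_derivative k t) (at t)" for t
  proof -
    have "((\<lambda>t. F (x + t *\<^sub>R s)) has_real_derivative (gradF (x + t *\<^sub>R s) \<bullet> s)) (at t)"
      unfolding has_field_derivative_def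
      by (rule has_derivative_eq_rhs[OF dcomp[OF grad]]) (auto simp: algebra_simps)
    then show ?thesis unfolding h_def k_def
      by (auto intro!: derivative_eq_intros simp: algebra_simps power2_eq_square power3_eq_cube)
  qed
  have "h 1 \<le> h 0"
    by (rule DERIV_nonpos_imp_nonincreasing) (use dh kle in auto)
  then show ?thesis by (simp add: h_def)
qed

lemma Yl: "m^2 * r \<le> m^3 + r^3" if "m \<ge> 0" "r\<ge>0" for m r :: real
proof (cases "m \<le> r")
  case True
  have "m^2 * r \<le> r^2 * r" using that True by (intro mult_right_mono power_mono) auto
  moreover have "r^2 * r = r^3" by (simp add: power2_eq_square power3_eq_cube)
  moreover have "m^3 \<ge> 0" using that by simp
  ultimately show ?thesis by linarith
next
  case False
  have "m^2 * r \<le> m^2 * m" using that False by (intro mult_left_mono) auto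
  moreover have "m^2 * m = m^3" by (simp add: power2_eq_square power3_eq_cube)
  moreover have "r^3 \<ge> 0" using that by simp
  ultimately show ?thesis by linarith
qed
lemma Y2: "m * r^2 \<le> m^3 + r^3" if "m \<ge> 0" "r\<ge>0" for m r :: real
  using Yl[OF that(2,1)] by (simp add: mult.commute add.commute)

theorem mainTheorem2:
  fixes F :: "real^'n \<Rightarrow> real"
    and gradF :: "real^'n \<Rightarrow> real^'n"
    and HessF :: "real^'n \<Rightarrow> real^'n^'n"
    and L2 \<epsilon>1 M \<alpha> \<beta> :: real
    and xk sk gk sk1 xk1 :: "real^'n"
    and Hk :: "real^'n^'n"
  assumes grad: "\<And>x. (F has_derivative (\<lambda>h. gradF x \<bullet> h)) (at x)"
    and hess: "\<And>x. (gradF has_derivative (\<lambda>h. HessF x *v h)) (at x)"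
    and lip: "\<And>x y. spec_norm (HessF x - HessF y) \<le> L2 * norm (x - y)"
    and eps: "\<epsilon>1 > 0" and Mpos: "M > 0" and alpha: "\<alpha> \<ge> 0" and beta: "\<beta> \<ge> 0"
    and Hsym: "transpose Hk = Hk"
    and Herr: "spec_norm (Hk - HessF xk) \<le> \<alpha> * max (norm sk) \<epsilon>1"
    and gerr: "norm (gk - gradF xk) \<le> \<beta> * max ((norm sk)\<^sup>2) (\<epsilon>1\<^sup>2)"
    and minim: "\<And>s. cubic_model gk Hk M sk1 \<le> cubic_model gk Hk M s"
    and step: "xk1 = xk + sk1"
  shows "F xk1 - F xk \<le>
           - ((3 * M - 2 * L2) / 12 - 2 * \<beta> - \<alpha>) * norm sk1 ^ 3
           + (\<beta> + \<alpha> / 2) * norm sk ^ 3 + (\<beta> + \<alpha> / 2) * \<epsilon>1 ^ 3"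
proof -
  define s where "s = sk1"
  define r where "r = norm s"
  define a where "a = gk \<bullet> s"
  define b where "b = s \<bullet> (Hk *v s)"
  define c where "c = a + b + M/2 * r^3"
  have r0: "r \<ge> 0" by (simp add: r_def)
  have "cubic_model gk Hk M s \<le> cubic_model gk Hk M (- s)" using minim by (simp add: s_def)
  moreover have "Hk *v (- s) = - (Hk *v s)"
    using matrix_vector_mult_scaleR[of Hk "-1" s] by simp
  ultimately have a0: "a \<le> 0"
    by (simp add: cubic_model_def a_def b_def)
  have cd: "c \<le> d * (\<bar>b\<bar>/2 + M/2 * r^3)" if d: "0 < d" "d < 1" for d
  proof -
    have "cubic_model gk Hk M s \<le> cubic_model gk Hk M ((1-d) *\<^sub>R s)" using minim by (simp add: s_def)
    then have "a + b/2 + M/6 * r^3 \<le> (1-d) * a + (1-d)^2/2 * b + M/6 * (1-d)^3 * r^3"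
      using d by (simp add: cubic_model_def a_def b_def r_def matrix_vector_mult_scaleR abs_of_pos power_mult_distrib power2_eq_square)
    moreover have "d * (d*b/2 + M/2*r^3*d - M/6*r^3*d^2 - (a+b+M/2*r^3)) = ((1-d)*a + (1-d)^2/2*b + M/6*(1-d)^3*r^3) - (a + b/2 + M/6*r^3)"
      by (simp add: power2_eq_square power3_eq_cube algebra_simps divide_simps)
    ultimately have "0 \<le> d * (d * b / 2 + M/2 * r^3 * d - M/6 * r^3 * d^2 - c)"
      unfolding c_def by linarith
    then have "0 \<le> d * b / 2 + M/2 * r^3 * d - M/6 * r^3 * d^2 - c"
      using d by (simp add: zero_le_mult_iff)
    moreover have "M/6 * r^3 * d^2 \<ge> 0" using Mpos r0 by simp
    moreover have "d * b \<le> d * \<bar>b\<bar>" using d by (simp add: mult_left_mono)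
    ultimately show ?thesis by (simp add: algebra_simps)
  qed
  have c0: "c \<le> 0"
  proof (rule ccontr)
    assume "\<not> c \<le> 0"
    then have cp: "c > 0" by simp
    define K where "K = \<bar>b\<bar>/2 + M/2 * r^3 + 1"
    have Kp: "K > 0" using Mpos r0 by (simp add: K_def add_nonneg_pos)
    define d where "d = min (1/2) (c / (2*K))"
    have d: "0 < d" "d < 1" using cp Kp by (auto simp: d_def)
    have "c \<le> d * (\<bar>b\<bar>/2 + M/2 * r^3)" by (rule cd[OF d])
    also have "\<dots> \<le> d * K" using d by (intro mult_left_mono) (auto simp: K_def)
    also have "\<dots> \<le> (c / (2*K)) * K" using Kp by (intro mult_right_mono) (auto simp: d_def)
    also have "\<dots> = c/2" using Kp by simp
    finally show False using cp by simp
  qed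
  have model: "a + b/2 \<le> - M/4 * r^3" using a0 c0 by (simp add: c_def)
  have tay: "F (xk + s) - F xk \<le> gradF xk \<bullet> s + 1/2 * (s \<bullet> (HessF xk *v s)) + L2/6 * r ^ 3"
    unfolding r_def by (rule taylor[OF grad hess lip])
  define m where "m = max (norm sk) \<epsilon>1"
  have m0: "m \<ge> 0" using eps by (simp add: m_def)
  have mm: "max ((norm sk)\<^sup>2) (\<epsilon>1\<^sup>2) = m^2"
    using eps by (auto simp: m_def max_def power_mono)
  have m3: "m^3 \<le> norm sk ^ 3 + \<epsilon>1 ^ 3" using eps by (auto simp: m_def max_def)
  have T1: "gradF xk \<bullet> s \<le> a + \<beta> * m^2 * r"
  proof -
    have "gradF xk \<bullet> s - a = (gradF xk - gk) \<bullet> s" by (simp add: a_def inner_diff_left)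
    also have "\<dots> \<le> norm (gradF xk - gk) * r" unfolding r_def by (rule norm_cauchy_schwarz)
    also have "\<dots> \<le> \<beta> * m^2 * r" using gerr r0 mm by (intro mult_right_mono) (auto simp: norm_minus_commute)
    finally show ?thesis by simp
  qed
  have T2: "s \<bullet> (HessF xk *v s) \<le> b + \<alpha> * m * r^2"
  proof -
    have "s \<bullet> (HessF xk *v s) - b = - (s \<bullet> ((Hk - HessF xk) *v s))"
      by (simp add: b_def matrix_vector_mult_diff_rdistrib inner_diff_right)
    also have "\<dots> \<le> r * norm ((Hk - HessF xk) *v s)"
      unfolding r_def using norm_cauchy_schwarz[of "-s"] by simp
    also have "\<dots> \<le> r * (spec_norm (Hk - HessF xk) * r)"
      using r0 spec_bound unfolding r_def by (intro mult_left_mono) auto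
    also have "\<dots> \<le> r * (\<alpha> * m * r)"
      using r0 Herr by (intro mult_left_mono mult_right_mono) (auto simp: m_def)
    finally show ?thesis by (simp add: power2_eq_square algebra_simps)
  qed
  have Y1: "m^2 * r \<le> m^3 + 2 * r^3" using Yl[OF m0 r0] zero_le_power[OF r0, of 3] by linarith
  have Y2: "m * r^2 \<le> m^3 + 2 * r^3" using Y2[OF m0 r0] zero_le_power[OF r0, of 3] by linarith
  have B1: "\<beta> * (m^2 * r) \<le> \<beta> * (norm sk ^ 3 + \<epsilon>1 ^ 3) + 2 * \<beta> * r^3"
  proof -
    have "\<beta> * (m^2 * r) \<le> \<beta> * (m^3 + 2 * r^3)" using Y1 beta by (rule mult_left_mono)
    also have "\<dots> \<le> \<beta> * (norm sk ^ 3 + \<epsilon>1 ^ 3 + 2 * r^3)" using m3 beta by (intro mult_left_mono) auto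
    finally show ?thesis by (simp add: algebra_simps)
  qed
  have B2: "\<alpha> * (m * r^2) \<le> \<alpha> * (norm sk ^ 3 + \<epsilon>1 ^ 3) + 2 * \<alpha> * r^3"
  proof -
    have "\<alpha> * (m * r^2) \<le> \<alpha> * (m^3 + 2 * r^3)" using Y2 alpha by (rule mult_left_mono)
    also have "\<dots> \<le> \<alpha> * (norm sk ^ 3 + \<epsilon>1 ^ 3 + 2 * r^3)" using m3 alpha by (intro mult_left_mono) auto
    finally show ?thesis by (simp add: algebra_simps)
  qed
  have L: "F xk1 - F xk \<le> - M/4 * r^3 + L2/6 * r^3 + \<beta> * (m^2 * r) + \<alpha>/2 * (m * r^2)"
    using tay T1 T2 model by (simp add: step s_def algebra_simps)
  have B1': "\<beta> * (m^2 * r) \<le> \<beta> * norm sk ^ 3 + \<beta> * \<epsilon>1 ^ 3 + 2 * \<beta> * r^3"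
    using B1 by (simp add: algebra_simps)
  have B2': "\<alpha>/2 * (m * r^2) \<le> \<alpha>/2 * norm sk ^ 3 + \<alpha>/2 * \<epsilon>1 ^ 3 + \<alpha> * r^3"
    using B2 by (simp add: algebra_simps)
  have E: "- ((3 * M - 2 * L2) / 12 - 2 * \<beta> - \<alpha>) * r ^ 3
           + (\<beta> + \<alpha> / 2) * norm sk ^ 3 + (\<beta> + \<alpha> / 2) * \<epsilon>1 ^ 3
        = - M/4 * r^3 + L2/6 * r^3 + 2 * \<beta> * r^3 + \<alpha> * r^3 + \<beta> * norm sk ^ 3
          + \<alpha>/2 * norm sk ^ 3 + \<beta> * \<epsilon>1 ^ 3 + \<alpha>/2 * \<epsilon>1 ^ 3"
    by (simp add: algebra_simps divide_simps)
  have "F xk1 - F xk \<le> - ((3 * M - 2 * L2) / 12 - 2 * \<beta> - \<alpha>) * r ^ 3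
           + (\<beta> + \<alpha> / 2) * norm sk ^ 3 + (\<beta> + \<alpha> / 2) * \<epsilon>1 ^ 3"
    unfolding E using L B1' B2' by linarith
  then show ?thesis by (simp add: r_def s_def)
qed

end
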